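(* Let $m,n\ge0$ be integers with $m+n$ even. If $n>m+2$, then there is no alternating $\mathcal B_{m,n}$-permutation.
   Context: For integers $i\le j$, $[i,j]=\{\ell\in\mathbb Z: i\le\ell\le j\}$ and $[N]=[1,N]$. $\mathcal B_{m,n}$ is the collection of nonempty subsets $I\subseteq[m+n]$ such that whenever $|I|\ge2$, $I\cap[m+1,m+n]$ is either $\emptyset$ or $[m+r,m+n]$ for some $1\le r\le n$ (a building set on $[m+n]$). For a building set $\mathcal B$ on $S$ (collection of nonempty subsets of $S$ containing all singletons, closed under unions of intersecting members; its connected components are its inclusion-maximal members; $\mathcal B|_I=\{J\in\mathcal B:J\subseteq I\}$) with $|S|=N$, a $\mathcal B$-permutation is a sequence $(x_1\cdots x_N)$ listing each element of $S$ once such that for each $i$, $x_i$ and $\max\{x_1,\dots,x_i\}$ lie in the same connected component of $\mathcal B|_{\{x_1,\dots,x_i\}}$; it is alternating if $x_1>x_2<x_3>\cdots$. *)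

theory Defs
  imports Main
begin

definition restr :: "'a set set \<Rightarrow> 'a set \<Rightarrow> 'a set set" where
  "restr B I = {J \<in> B. J \<subseteq> I}"

definition components :: "'a set set \<Rightarrow> 'a set set" where
  "components B = {J \<in> B. \<forall>K\<in>B. J \<subseteq> K \<longrightarrow> K = J}"

text \<open>B-permutation of the ground set S (list xs = x_1 ... x_N, 0-indexed).\<close>
definition B_perm :: "'a::linorder set set \<Rightarrow> 'a set \<Rightarrow> 'a list \<Rightarrow> bool" where
  "B_perm B S xs \<longleftrightarrow> distinct xs \<and> set xs = S \<and>
     (\<forall>i<length xs. \<exists>C\<in>components (restr B (set (take (Suc i) xs))).
         xs ! i \<in> C \<and> Max (set (take (Suc i) xs)) \<in> C)"

definition alternating :: "'a::linorder list \<Rightarrow> bool" where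
  "alternating xs \<longleftrightarrow> (\<forall>i. Suc i < length xs \<longrightarrow>
     (if even i then xs ! i > xs ! Suc i else xs ! i < xs ! Suc i))"

definition B_mn :: "nat \<Rightarrow> nat \<Rightarrow> nat set set" where
  "B_mn m n = {I. I \<noteq> {} \<and> I \<subseteq> {1..m+n} \<and>
     (card I \<ge> 2 \<longrightarrow> I \<inter> {m+1..m+n} = {} \<or>
        (\<exists>r. 1 \<le> r \<and> r \<le> n \<and> I \<inter> {m+1..m+n} = {m+r..m+n}))}"

end

theory Submission
  imports Defs
begin

lemma key:
  assumes bp: "B_perm (B_mn m n) {1..m+n} xs"
    and j0: "0 < j" and jl: "Suc j < length xs"
    and um: "xs ! j > m"
    and w: "xs ! (j - 1) > xs ! j" and v: "xs ! Suc j > xs ! j"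
  shows False
proof -
  define P where "P = set (take (Suc j) xs)"
  have d: "distinct xs" and s: "set xs = {1..m+n}" using bp by (auto simp: B_perm_def)
  obtain C where C: "C \<in> components (restr (B_mn m n) P)" "xs ! j \<in> C" "Max P \<in> C"
    using bp jl unfolding B_perm_def P_def by (metis Suc_lessD)
  have CB: "C \<in> B_mn m n" "C \<subseteq> P" using C(1) by (auto simp: components_def restr_def)
  have uP: "xs ! j \<in> P" unfolding P_def using jl by (simp add: take_Suc_conv_app_nth)
  have wP: "xs ! (j-1) \<in> P"
  proof -
    have "take (Suc j) xs ! (j-1) \<in> set (take (Suc j) xs)" by (rule nth_mem) (use jl j0 in simp)
    thus ?thesis unfolding P_def using j0 by simp
  qed
  have fin: "finite P" unfolding P_def by simp
  have "Max P \<ge> xs ! (j-1)" using wP fin by simp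
  hence ne: "Max P \<noteq> xs ! j" using w by simp
  have "card C \<ge> 2"
  proof -
    have "{xs ! j, Max P} \<subseteq> C" using C by auto
    moreover have "finite C" using CB fin finite_subset by blast
    ultimately have "card {xs ! j, Max P} \<le> card C" by (rule card_mono[rotated])
    thus ?thesis using ne by simp
  qed
  have ujr: "xs ! j \<in> {1..m+n}" using s jl by (metis Suc_lessD nth_mem)
  have vjr: "xs ! Suc j \<in> {1..m+n}" using s jl by (metis nth_mem)
  have "xs ! j \<in> C \<inter> {m+1..m+n}" using C ujr um by auto
  then obtain r where r: "C \<inter> {m+1..m+n} = {m+r..m+n}"
    using CB(1) \<open>card C \<ge> 2\<close> unfolding B_mn_def by blast
  have "xs ! j \<in> {m+r..m+n}" using r \<open>xs ! j \<in> C \<inter> {m+1..m+n}\<close> by simp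
  hence "xs ! Suc j \<in> {m+r..m+n}" using v vjr by auto
  hence "xs ! Suc j \<in> P" using r CB(2) by auto
  moreover have "xs ! Suc j \<notin> P"
  proof
    assume "xs ! Suc j \<in> P"
    then obtain i where i: "i < Suc j" "xs ! i = xs ! Suc j" unfolding P_def
      by (auto simp: in_set_conv_nth)
    thus False using d jl nth_eq_iff_index_eq by fastforce
  qed
  ultimately show False by simp
qed

theorem lemma6p2:
  fixes m n :: nat
  assumes "even (m + n)" and "n > m + 2"
  shows "\<not> (\<exists>xs. B_perm (B_mn m n) {1..m+n} xs \<and> alternating xs)"
proof
  assume "\<exists>xs. B_perm (B_mn m n) {1..m+n} xs \<and> alternating xs"
  then obtain xs where bp: "B_perm (B_mn m n) {1..m+n} xs" and al: "alternating xs" by blast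
  have d: "distinct xs" and s: "set xs = {1..m+n}" using bp by (auto simp: B_perm_def)
  have len: "length xs = m + n" using distinct_card[OF d] s by simp
  define K where "K = (m + n - 2) div 2"
  have img: "xs ! (2*k+1) \<in> {1..m}" if k: "k < K" for k
  proof -
    have kl: "Suc (2*k+1) < length xs" using k len unfolding K_def by linarith
    have l1: "Suc (2*k) < length xs" using kl by simp
    have a1: "xs ! (2*k) > xs ! (2*k+1)"
      using al[unfolded alternating_def, rule_format, OF l1] by simp
    have a2: "xs ! (2*k+1) < xs ! Suc (2*k+1)"
      using al[unfolded alternating_def, rule_format, OF kl] by simp
    have "xs ! (2*k+1) \<in> {1..m+n}" using s kl by (metis Suc_lessD nth_mem)
    moreover have "\<not> xs ! (2*k+1) > m"
    proof
      assume "xs ! (2*k+1) > m"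
      show False by (rule key[OF bp _ kl \<open>xs ! (2*k+1) > m\<close>]) (use a1 a2 in simp_all)
    qed
    ultimately show ?thesis by auto
  qed
  have "inj_on (\<lambda>k. xs ! (2*k+1)) {..<K}"
  proof (rule inj_onI)
    fix a b assume "a \<in> {..<K}" "b \<in> {..<K}" "xs ! (2*a+1) = xs ! (2*b+1)"
    moreover have "2*a+1 < length xs" "2*b+1 < length xs" using calculation len unfolding K_def by auto
    ultimately show "a = b" using d nth_eq_iff_index_eq by fastforce
  qed
  hence "card {..<K} \<le> card {1..m}"
    by (rule card_inj_on_le) (use img in auto)
  hence "K \<le> m" by simp
  thus False using assms unfolding K_def by presburger
qed

end
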